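(* Let $V$ be a left vector space over a field $K$ (any dimension) with $\mathcal G\neq\emptyset$, and let $d\ge0$ be an integer. For $X,Y\in\mathcal G$ the following are equivalent: (i) $X$ and $Y$ are at distance $d$ in the Grassmann graph on $\mathcal G$; (ii) $\dim((X+Y)/X)=\dim((X+Y)/Y)=d$; (iii) $\dim(X/(X\cap Y))=\dim(Y/(X\cap Y))=d$.
   Context: Fields are not necessarily commutative (division rings). $\mathcal G$ denotes the set of all subspaces $X\le V$ such that $X$ is isomorphic to $V/X$. Two elements $X,Y\in\mathcal G$ are adjacent if $\dim((X+Y)/X)=\dim((X+Y)/Y)=1$. The Grassmann graph on $\mathcal G$ has vertex set $\mathcal G$ and edges the pairs of adjacent elements; distance means graph distance (infinite if no path exists). *)

theory Defs
  imports Main "HOL-Library.Extended_Nat"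
begin

text \<open>A left vector space over a division ring 'k: the carrier V is the whole type 'v,
  with scalar multiplication smult acting on the left.\<close>
definition left_vector_space :: "('k::division_ring \<Rightarrow> 'v::ab_group_add \<Rightarrow> 'v) \<Rightarrow> bool" where
  "left_vector_space smult \<longleftrightarrow>
     (\<forall>a x y. smult a (x + y) = smult a x + smult a y) \<and>
     (\<forall>a b x. smult (a + b) x = smult a x + smult b x) \<and>
     (\<forall>a b x. smult (a * b) x = smult a (smult b x)) \<and>
     (\<forall>x. smult 1 x = x)"

definition subspace :: "('k::division_ring \<Rightarrow> 'v::ab_group_add \<Rightarrow> 'v) \<Rightarrow> 'v set \<Rightarrow> bool" where
  "subspace smult S \<longleftrightarrow> 0 \<in> S \<and> (\<forall>x\<in>S. \<forall>y\<in>S. x + y \<in> S) \<and> (\<forall>a. \<forall>x\<in>S. smult a x \<in> S)"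

definition ssum :: "'v::ab_group_add set \<Rightarrow> 'v set \<Rightarrow> 'v set" where
  "ssum A B = {a + b | a b. a \<in> A \<and> b \<in> B}"

definition coset :: "'v::ab_group_add set \<Rightarrow> 'v \<Rightarrow> 'v set" where
  "coset X v = (\<lambda>x. v + x) ` X"

text \<open>X is isomorphic to V/X: the quotient V/X is the set of cosets of X, with operations
  defined on representatives; g is a linear bijection from X onto V/X.\<close>
definition iso_to_quotient :: "('k::division_ring \<Rightarrow> 'v::ab_group_add \<Rightarrow> 'v) \<Rightarrow> 'v set \<Rightarrow> bool" where
  "iso_to_quotient smult X \<longleftrightarrow>
     (\<exists>g. bij_betw g X (range (coset X)) \<and>
          (\<forall>a\<in>X. \<forall>b\<in>X. \<forall>c. \<forall>u\<in>g a. \<forall>w\<in>g b.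
              g (smult c a + b) = coset X (smult c u + w)))"

text \<open>dim(A/B) = d (for subspaces B \<subseteq> A): there are d vectors of A whose cosets mod B form
  a basis of A/B (spanning A/B and linearly independent in A/B).\<close>
definition qdim_eq :: "('k::division_ring \<Rightarrow> 'v::ab_group_add \<Rightarrow> 'v) \<Rightarrow> 'v set \<Rightarrow> 'v set \<Rightarrow> nat \<Rightarrow> bool" where
  "qdim_eq smult A B d \<longleftrightarrow>
     (\<exists>v :: nat \<Rightarrow> 'v. (\<forall>i<d. v i \<in> A) \<and>
        (\<forall>a\<in>A. \<exists>c. \<exists>b\<in>B. a = (\<Sum>i<d. smult (c i) (v i)) + b) \<and>
        (\<forall>c. (\<Sum>i<d. smult (c i) (v i)) \<in> B \<longrightarrow> (\<forall>i<d. c i = 0)))"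

definition Gr :: "('k::division_ring \<Rightarrow> 'v::ab_group_add \<Rightarrow> 'v) \<Rightarrow> 'v set set" where
  "Gr smult = {X. subspace smult X \<and> iso_to_quotient smult X}"

definition adjacent :: "('k::division_ring \<Rightarrow> 'v::ab_group_add \<Rightarrow> 'v) \<Rightarrow> 'v set \<Rightarrow> 'v set \<Rightarrow> bool" where
  "adjacent smult X Y \<longleftrightarrow> qdim_eq smult (ssum X Y) X 1 \<and> qdim_eq smult (ssum X Y) Y 1"

definition gwalk :: "('k::division_ring \<Rightarrow> 'v::ab_group_add \<Rightarrow> 'v) \<Rightarrow> 'v set \<Rightarrow> 'v set \<Rightarrow> nat \<Rightarrow> bool" where
  "gwalk smult X Y n \<longleftrightarrow>
     (\<exists>p :: nat \<Rightarrow> 'v set. p 0 = X \<and> p n = Y \<and> (\<forall>i\<le>n. p i \<in> Gr smult) \<and>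
        (\<forall>i<n. adjacent smult (p i) (p (Suc i))))"

text \<open>Graph distance (infinite if no path exists).\<close>
definition gdist :: "('k::division_ring \<Rightarrow> 'v::ab_group_add \<Rightarrow> 'v) \<Rightarrow> 'v set \<Rightarrow> 'v set \<Rightarrow> enat" where
  "gdist smult X Y = Inf (enat ` {n. gwalk smult X Y n})"

end

theory Submission
  imports Defs
begin


locale lvs =
  fixes sm :: "'k::division_ring \<Rightarrow> 'v::ab_group_add \<Rightarrow> 'v"
  assumes lvs: "left_vector_space sm"
begin

lemma sm_add_right: "sm a (x + y) = sm a x + sm a y"
  using lvs unfolding left_vector_space_def by blast
lemma sm_add_left: "sm (a + b) x = sm a x + sm b x"
  using lvs unfolding left_vector_space_def by blast
lemma sm_assoc: "sm (a * b) x = sm a (sm b x)"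
  using lvs unfolding left_vector_space_def by blast
lemma sm_one[simp]: "sm 1 x = x"
  using lvs unfolding left_vector_space_def by blast

lemma sm_zero_left[simp]: "sm 0 x = 0"
  using sm_add_left[of 0 0 x] by simp
lemma sm_zero_right[simp]: "sm a 0 = 0"
  using sm_add_right[of a 0 0] by simp
lemma sm_minus_left: "sm (- a) x = - sm a x"
  using sm_add_left[of a "-a" x] by (simp add: eq_neg_iff_add_eq_0 add.commute)
lemma sm_minus_right: "sm a (- x) = - sm a x"
  using sm_add_right[of a x "-x"] by (simp add: eq_neg_iff_add_eq_0 add.commute)
lemma sm_diff_right: "sm a (x - y) = sm a x - sm a y"
  using sm_add_right[of a x "-y"] by (simp add: sm_minus_right)
lemma sm_diff_left: "sm (a - b) x = sm a x - sm b x"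
  using sm_add_left[of a "-b" x] by (simp add: sm_minus_left)
lemma sm_sum_right: "sm a (sum f S) = (\<Sum>i\<in>S. sm a (f i))"
  by (induction S rule: infinite_finite_induct) (auto simp: sm_add_right)
lemma sm_sum_left: "sm (sum f S) x = (\<Sum>i\<in>S. sm (f i) x)"
  by (induction S rule: infinite_finite_induct) (auto simp: sm_add_left)
lemma sm_inv: "a \<noteq> 0 \<Longrightarrow> sm (inverse a) (sm a x) = x"
  by (simp flip: sm_assoc)

definition lc :: "'v set \<Rightarrow> ('v \<Rightarrow> 'k) \<Rightarrow> 'v" where
  "lc S c = (\<Sum>s\<in>S. sm (c s) s)"

definition spanB :: "'v set \<Rightarrow> 'v set \<Rightarrow> 'v set" where
  "spanB B S = {lc S c + b | c b. b \<in> B}"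

definition indepB :: "'v set \<Rightarrow> 'v set \<Rightarrow> bool" where
  "indepB B S \<longleftrightarrow> finite S \<and> (\<forall>c. lc S c \<in> B \<longrightarrow> (\<forall>s\<in>S. c s = 0))"

definition dimq :: "'v set \<Rightarrow> 'v set \<Rightarrow> nat \<Rightarrow> bool" where
  "dimq A B n \<longleftrightarrow> (\<exists>S. S \<subseteq> A \<and> finite S \<and> card S = n \<and> A \<subseteq> spanB B S \<and> indepB B S)"

abbreviation "sub \<equiv> subspace sm"

lemma lc_add: "lc S c + lc S d = lc S (\<lambda>s. c s + d s)"
  by (simp add: lc_def sm_add_left sum.distrib)
lemma lc_diff: "lc S c - lc S d = lc S (\<lambda>s. c s - d s)"
  by (simp add: lc_def sm_diff_left sum_subtractf)
lemma lc_sm: "sm a (lc S c) = lc S (\<lambda>s. a * c s)"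
  by (simp add: lc_def sm_sum_right sm_assoc)
lemma lc_zero[simp]: "lc S (\<lambda>_. 0) = 0"
  by (simp add: lc_def)
lemma lc_cong: "(\<And>s. s \<in> S \<Longrightarrow> c s = d s) \<Longrightarrow> lc S c = lc S d"
  by (simp add: lc_def)
lemma lc_empty[simp]: "lc {} c = 0"
  by (simp add: lc_def)
lemma lc_insert: "finite S \<Longrightarrow> s \<notin> S \<Longrightarrow> lc (insert s S) c = sm (c s) s + lc S c"
  by (simp add: lc_def)
lemma lc_union: "finite A \<Longrightarrow> finite B \<Longrightarrow> A \<inter> B = {} \<Longrightarrow> lc (A \<union> B) c = lc A c + lc B c"
  by (simp add: lc_def sum.union_disjoint)
lemma lc_extend: "finite T \<Longrightarrow> A \<subseteq> T \<Longrightarrow> lc A c = lc T (\<lambda>t. if t \<in> A then c t else 0)"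
  unfolding lc_def by (rule sum.mono_neutral_cong_left) auto
lemma lc_indicator: "finite S \<Longrightarrow> s \<in> S \<Longrightarrow> lc S (\<lambda>t. if t = s then 1 else 0) = s"
  unfolding lc_def by (subst sum.remove[of S s]) auto
lemma lc_image: "inj_on f A \<Longrightarrow> lc (f ` A) c = (\<Sum>s\<in>A. sm (c (f s)) (f s))"
  unfolding lc_def by (simp add: sum.reindex)

lemma sub0: "sub B \<Longrightarrow> 0 \<in> B" by (simp add: subspace_def)
lemma sub_add: "sub B \<Longrightarrow> x \<in> B \<Longrightarrow> y \<in> B \<Longrightarrow> x + y \<in> B" by (simp add: subspace_def)
lemma sub_sm: "sub B \<Longrightarrow> x \<in> B \<Longrightarrow> sm a x \<in> B" by (simp add: subspace_def)
lemma sub_neg: "sub B \<Longrightarrow> x \<in> B \<Longrightarrow> - x \<in> B"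
  using sub_sm[of B x "-1"] by (simp add: sm_minus_left)
lemma sub_diff: "sub B \<Longrightarrow> x \<in> B \<Longrightarrow> y \<in> B \<Longrightarrow> x - y \<in> B"
  using sub_add[of B x "-y"] sub_neg[of B y] by simp
lemma sub_sum: "sub B \<Longrightarrow> (\<And>i. i \<in> I \<Longrightarrow> f i \<in> B) \<Longrightarrow> sum f I \<in> B"
  by (induction I rule: infinite_finite_induct) (auto simp: sub0 sub_add)
lemma sub_lc: "sub B \<Longrightarrow> S \<subseteq> B \<Longrightarrow> lc S c \<in> B"
  unfolding lc_def by (rule sub_sum) (auto intro: sub_sm)
lemma sub_add_cancel: "sub B \<Longrightarrow> x \<in> B \<Longrightarrow> (x + y \<in> B) = (y \<in> B)"
  by (metis add_diff_cancel_left' sub_add sub_diff)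
lemma sub_inter: "sub A \<Longrightarrow> sub B \<Longrightarrow> sub (A \<inter> B)"
  by (auto simp: subspace_def)
lemma sub_UNIV: "sub UNIV" by (simp add: subspace_def)

lemma sub_spanB: assumes "sub B" shows "sub (spanB B S)"
  unfolding subspace_def spanB_def
proof (intro conjI ballI allI)
  show "0 \<in> {lc S c + b |c b. b \<in> B}" using sub0[OF assms] by (auto intro!: exI[of _ "\<lambda>_. 0"])
next
  fix x y assume "x \<in> {lc S c + b |c b. b \<in> B}" "y \<in> {lc S c + b |c b. b \<in> B}"
  then obtain c b d b' where "x = lc S c + b" "y = lc S d + b'" "b \<in> B" "b' \<in> B" by auto
  then show "x + y \<in> {lc S c + b |c b. b \<in> B}"
    by (intro CollectI exI[of _ "\<lambda>s. c s + d s"] exI[of _ "b + b'"])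
       (auto simp: sub_add[OF assms] algebra_simps simp flip: lc_add)
next
  fix a x assume "x \<in> {lc S c + b |c b. b \<in> B}"
  then obtain c b where "x = lc S c + b" "b \<in> B" by auto
  then show "sm a x \<in> {lc S c + b |c b. b \<in> B}"
    by (intro CollectI exI[of _ "\<lambda>s. a * c s"] exI[of _ "sm a b"])
       (auto simp: sub_sm[OF assms] sm_add_right lc_sm)
qed

lemma spanB_B: "sub B \<Longrightarrow> B \<subseteq> spanB B S"
  unfolding spanB_def by (auto intro!: exI[of _ "\<lambda>_. 0"])

lemma spanB_S: "finite S \<Longrightarrow> sub B \<Longrightarrow> S \<subseteq> spanB B S"
proof
  fix s assume "finite S" "sub B" "s \<in> S"
  then show "s \<in> spanB B S" unfolding spanB_def
    by (intro CollectI exI[of _ "\<lambda>t. if t = s then 1 else 0"] exI[of _ 0])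
       (auto simp: lc_indicator sub0)
qed

lemma spanB_min: "sub A \<Longrightarrow> B \<subseteq> A \<Longrightarrow> S \<subseteq> A \<Longrightarrow> spanB B S \<subseteq> A"
  unfolding spanB_def by (auto intro!: sub_add sub_lc)

lemma spanB_I: "b \<in> B \<Longrightarrow> x = lc S c + b \<Longrightarrow> x \<in> spanB B S"
  unfolding spanB_def by auto

end


context lvs begin

lemma spanB_empty: "spanB B {} = B"
  unfolding spanB_def by auto

lemma indep_not_in: "indepB B S \<Longrightarrow> s \<in> S \<Longrightarrow> s \<notin> B"
proof
  assume "indepB B S" "s \<in> S" "s \<in> B"
  then have "lc S (\<lambda>t. if t = s then 1 else 0) \<in> B" by (simp add: lc_indicator indepB_def)
  then show False using \<open>indepB B S\<close> \<open>s \<in> S\<close> unfolding indepB_def by fastforce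
qed

lemma steinitz:
  assumes "sub B" "finite T"
  shows "indepB B S \<Longrightarrow> S \<subseteq> spanB B T \<Longrightarrow> card S \<le> card T"
  using assms(2)
proof (induction T arbitrary: S rule: finite_induct)
  case empty
  then have "S = {}" using indep_not_in[OF empty(1)] by (auto simp: spanB_empty)
  then show ?case by simp
next
  case (insert t T)
  have finS: "finite S" using insert.prems by (simp add: indepB_def)
  have "\<forall>s\<in>S. \<exists>c b. b \<in> B \<and> s = lc (insert t T) c + b"
    using insert.prems(2) unfolding spanB_def by blast
  then obtain cf where "\<forall>s\<in>S. \<exists>b. b \<in> B \<and> s = lc (insert t T) (cf s) + b"
    by (rule bchoice[elim_format]) blast
  then obtain bf where "\<forall>s\<in>S. bf s \<in> B \<and> s = lc (insert t T) (cf s) + bf s"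
    by (rule bchoice[elim_format]) blast
  then have cfb: "\<And>s. s \<in> S \<Longrightarrow> bf s \<in> B \<and> s = lc (insert t T) (cf s) + bf s" by blast
  define \<alpha> where "\<alpha> s = cf s t" for s
  have rep: "s = sm (\<alpha> s) t + lc T (cf s) + bf s" if "s \<in> S" for s
    using cfb[OF that] insert.hyps by (simp add: lc_insert \<alpha>_def add.assoc)
  show ?case
  proof (cases "\<forall>s\<in>S. \<alpha> s = 0")
    case True
    have "S \<subseteq> spanB B T"
    proof
      fix s assume "s \<in> S"
      then show "s \<in> spanB B T" using rep[of s] True cfb[of s] by (auto intro: spanB_I)
    qed
    then have "card S \<le> card T" using insert.IH insert.prems by blast
    then show ?thesis using insert.hyps by simp
  next
    case False
    then obtain s0 where s0: "s0 \<in> S" "\<alpha> s0 \<noteq> 0" by auto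
    define lam where "lam s = \<alpha> s * inverse (\<alpha> s0)" for s
    define f where "f s = s - sm (lam s) s0" for s
    have lam: "lam s * \<alpha> s0 = \<alpha> s" for s
      using s0(2) by (simp add: lam_def mult.assoc)
    have key: "(\<Sum>s\<in>S-{s0}. sm (e s) (f s)) =
       lc S (\<lambda>s. if s = s0 then - (\<Sum>u\<in>S-{s0}. e u * lam u) else e s)" for e
    proof -
      have "(\<Sum>s\<in>S-{s0}. sm (e s) (f s)) = (\<Sum>s\<in>S-{s0}. sm (e s) s) - (\<Sum>s\<in>S-{s0}. sm (e s * lam s) s0)"
        by (simp add: f_def sm_diff_right sum_subtractf sm_assoc)
      also have "\<dots> = (\<Sum>s\<in>S-{s0}. sm (e s) s) + sm (- (\<Sum>u\<in>S-{s0}. e u * lam u)) s0"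
        by (simp add: sm_sum_left sm_minus_left)
      also have "\<dots> = lc S (\<lambda>s. if s = s0 then - (\<Sum>u\<in>S-{s0}. e u * lam u) else e s)"
        unfolding lc_def using finS s0(1) by (subst sum.remove[of S s0]) (auto simp: add.commute)
      finally show ?thesis .
    qed
    have ind: "\<And>c. lc S c \<in> B \<Longrightarrow> \<forall>s\<in>S. c s = 0" using insert.prems(1) by (simp add: indepB_def)
    have injf: "inj_on f (S - {s0})"
    proof (rule inj_onI, rule ccontr)
      fix x y assume xy: "x \<in> S - {s0}" "y \<in> S - {s0}" "f x = f y" "x \<noteq> y"
      define e where "e s = (if s = x then 1 else if s = y then -1 else (0::'k))" for s
      have "(\<Sum>s\<in>S-{s0}. sm (e s) (f s)) = (\<Sum>s\<in>{x,y}. sm (e s) (f s))"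
        by (rule sum.mono_neutral_right) (use xy finS in \<open>auto simp: e_def\<close>)
      also have "\<dots> = f x - f y"
        using xy(4) by (simp add: e_def sm_minus_left)
      finally have "(\<Sum>s\<in>S-{s0}. sm (e s) (f s)) = f x - f y" .
      then have "lc S (\<lambda>s. if s = s0 then - (\<Sum>u\<in>S-{s0}. e u * lam u) else e s) \<in> B"
        using key xy(3) sub0[OF assms(1)] by simp
      then show False using ind xy unfolding e_def by fastforce
    qed
    define S' where "S' = f ` (S - {s0})"
    have "indepB B S'"
      unfolding indepB_def
    proof (intro conjI allI impI ballI)
      show "finite S'" using finS by (simp add: S'_def)
      fix c s assume c: "lc S' c \<in> B" and s: "s \<in> S'"
      have "lc S' c = (\<Sum>u\<in>S-{s0}. sm (c (f u)) (f u))"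
        unfolding S'_def using injf by (simp add: lc_image)
      then have "lc S (\<lambda>u. if u = s0 then - (\<Sum>w\<in>S-{s0}. c (f w) * lam w) else c (f u)) \<in> B"
        using key c by simp
      then have "\<forall>u\<in>S. (if u = s0 then - (\<Sum>w\<in>S-{s0}. c (f w) * lam w) else c (f u)) = 0"
        using ind by blast
      moreover obtain u where "u \<in> S - {s0}" "s = f u" using s unfolding S'_def by auto
      ultimately show "c s = 0" by auto
    qed
    moreover have "S' \<subseteq> spanB B T"
    proof
      fix x assume "x \<in> S'"
      then obtain s where s: "s \<in> S" "s \<noteq> s0" "x = f s" unfolding S'_def by auto
      have "sm (lam s) s0 = sm (\<alpha> s) t + lc T (\<lambda>u. lam s * cf s0 u) + sm (lam s) (bf s0)"
        apply (subst rep[OF s0(1)])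
        by (simp add: sm_add_right lc_sm lam flip: sm_assoc)
      then have "x = (lc T (cf s) - lc T (\<lambda>u. lam s * cf s0 u)) + (bf s - sm (lam s) (bf s0))"
        unfolding s f_def using rep[OF s(1)]
        by (metis (no_types, lifting) add_diff_add add_diff_cancel_left)
      then have "x = lc T (\<lambda>u. cf s u - lam s * cf s0 u) + (bf s - sm (lam s) (bf s0))"
        by (simp add: lc_diff)
      moreover have "bf s - sm (lam s) (bf s0) \<in> B"
        using cfb s s0 assms(1) by (simp add: sub_diff sub_sm)
      ultimately show "x \<in> spanB B T" by (auto intro: spanB_I)
    qed
    ultimately have "card S' \<le> card T" using insert.IH by blast
    moreover have "card S' = card S - 1"
      unfolding S'_def using injf finS s0 by (simp add: card_image)
    moreover have "card S > 0" using finS s0 card_gt_0_iff by blast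
    ultimately show ?thesis using insert.hyps by simp
  qed
qed

end


context lvs begin

lemma spanB_mono: "sub B' \<Longrightarrow> B \<subseteq> B' \<Longrightarrow> finite S' \<Longrightarrow> S \<subseteq> S' \<Longrightarrow> spanB B S \<subseteq> spanB B' S'"
  by (rule spanB_min) (use sub_spanB spanB_B spanB_S in blast)+

lemma indep_insert:
  assumes "sub B" "indepB B U" "x \<notin> spanB B U"
  shows "indepB B (insert x U)"
proof -
  have finU: "finite U" using assms(2) by (simp add: indepB_def)
  have xU: "x \<notin> U" using assms(3) spanB_S[OF finU assms(1)] by blast
  show ?thesis unfolding indepB_def
  proof (intro conjI allI impI ballI)
    show "finite (insert x U)" using finU by simp
    fix c s assume c: "lc (insert x U) c \<in> B" and s: "s \<in> insert x U"
    have eq: "lc (insert x U) c = sm (c x) x + lc U c" using finU xU by (simp add: lc_insert)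
    have cx: "c x = 0"
    proof (rule ccontr)
      assume ne: "c x \<noteq> 0"
      have "sm (c x) x = lc (insert x U) c - lc U c" using eq by simp
      then have "x = sm (inverse (c x)) (lc (insert x U) c - lc U c)"
        using sm_inv[OF ne, of x] by simp
      moreover have "lc (insert x U) c - lc U c \<in> spanB B U"
        using c sub_spanB[OF assms(1)] spanB_B[OF assms(1)] spanB_S[OF finU assms(1)]
        by (meson sub_diff sub_lc subsetD)
      ultimately have "x \<in> spanB B U" using sub_spanB[OF assms(1)] sub_sm by metis
      then show False using assms(3) by blast
    qed
    then have "lc U c \<in> B" using eq c by simp
    then have "\<forall>s\<in>U. c s = 0" using assms(2) by (simp add: indepB_def)
    then show "c s = 0" using s cx by auto
  qed
qed

lemma dimq_exists:
  assumes "sub A" "sub B" "B \<subseteq> A" "finite T" "A \<subseteq> spanB B T"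
  shows "\<exists>m \<le> card T. dimq A B m"
proof -
  define K where "K = {card U | U. U \<subseteq> A \<and> indepB B U}"
  have bd: "k \<le> card T" if "k \<in> K" for k
    using that steinitz[OF assms(2) assms(4)] assms(5) unfolding K_def by blast
  have finK: "finite K" using bd by (meson finite_nat_set_iff_bounded_le)
  have "0 \<in> K" unfolding K_def by (auto intro!: exI[of _ "{}"] simp: indepB_def)
  then have "Max K \<in> K" using finK Max_in by blast
  then obtain U where U: "U \<subseteq> A" "indepB B U" "card U = Max K" unfolding K_def by auto
  have "A \<subseteq> spanB B U"
  proof
    fix a assume a: "a \<in> A"
    show "a \<in> spanB B U"
    proof (rule ccontr)
      assume na: "a \<notin> spanB B U"
      have "indepB B (insert a U)" by (rule indep_insert[OF assms(2) U(2) na])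
      moreover have "a \<notin> U" using na spanB_S[of U B] U(2) assms(2) by (auto simp: indepB_def)
      ultimately have "Suc (card U) \<in> K" using U a unfolding K_def
        by (intro CollectI exI[of _ "insert a U"]) (auto simp: indepB_def)
      then show False using Max_ge[OF finK] U(3) by fastforce
    qed
  qed
  then have "dimq A B (card U)" using U unfolding dimq_def by (auto simp: indepB_def)
  moreover have "card U \<le> card T" using bd \<open>Max K \<in> K\<close> U(3) by simp
  ultimately show ?thesis by blast
qed

lemma dimq_unique:
  assumes "sub B" "dimq A B m" "dimq A B n" shows "m = n"
proof -
  obtain S where S: "S \<subseteq> A" "finite S" "card S = m" "A \<subseteq> spanB B S" "indepB B S"
    using assms(2) unfolding dimq_def by blast
  obtain S' where S': "S' \<subseteq> A" "finite S'" "card S' = n" "A \<subseteq> spanB B S'" "indepB B S'"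
    using assms(3) unfolding dimq_def by blast
  have "m \<le> n" using steinitz[OF assms(1) S'(2) S(5)] S S' by blast
  moreover have "n \<le> m" using steinitz[OF assms(1) S(2) S'(5)] S S' by blast
  ultimately show ?thesis by simp
qed

lemma dimq_tower:
  assumes "sub P" "sub Q" "P \<subseteq> Q" "Q \<subseteq> R" "dimq R Q a" "dimq Q P b"
  shows "dimq R P (a + b)"
proof -
  obtain Sa where Sa: "Sa \<subseteq> R" "finite Sa" "card Sa = a" "R \<subseteq> spanB Q Sa" "indepB Q Sa"
    using assms(5) unfolding dimq_def by blast
  obtain Sb where Sb: "Sb \<subseteq> Q" "finite Sb" "card Sb = b" "Q \<subseteq> spanB P Sb" "indepB P Sb"
    using assms(6) unfolding dimq_def by blast
  have disj: "Sa \<inter> Sb = {}" using indep_not_in[OF Sa(5)] Sb(1) by blast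
  have lcU: "lc (Sa \<union> Sb) k = lc Sa k + lc Sb k" for k using lc_union[OF Sa(2) Sb(2) disj] .
  show ?thesis unfolding dimq_def
  proof (intro exI[of _ "Sa \<union> Sb"] conjI)
    show "Sa \<union> Sb \<subseteq> R" using Sa Sb assms by blast
    show "finite (Sa \<union> Sb)" using Sa Sb by simp
    show "card (Sa \<union> Sb) = a + b" using Sa Sb disj by (simp add: card_Un_disjoint)
    show "R \<subseteq> spanB P (Sa \<union> Sb)"
    proof
      fix r assume "r \<in> R"
      then obtain c q where cq: "q \<in> Q" "r = lc Sa c + q" using Sa(4) unfolding spanB_def by blast
      then obtain c' p where cp: "p \<in> P" "q = lc Sb c' + p" using Sb(4) unfolding spanB_def by blast
      define k where "k s = (if s \<in> Sa then c s else c' s)" for s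
      have "lc Sa k = lc Sa c" by (rule lc_cong) (simp add: k_def)
      moreover have "lc Sb k = lc Sb c'" by (rule lc_cong) (use disj in \<open>auto simp: k_def\<close>)
      ultimately have "r = lc (Sa \<union> Sb) k + p" using cq cp lcU by (simp add: add.assoc)
      then show "r \<in> spanB P (Sa \<union> Sb)" using cp by (auto intro: spanB_I)
    qed
    show "indepB P (Sa \<union> Sb)" unfolding indepB_def
    proof (intro conjI allI impI ballI)
      show "finite (Sa \<union> Sb)" using Sa Sb by simp
      fix k s assume k: "lc (Sa \<union> Sb) k \<in> P" and s: "s \<in> Sa \<union> Sb"
      have "lc Sb k \<in> Q" using sub_lc[OF assms(2) Sb(1)] .
      moreover have "lc Sa k + lc Sb k \<in> Q" using k lcU assms(3) by auto
      ultimately have "lc Sa k \<in> Q" using assms(2) by (metis add_diff_cancel_right' sub_diff)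
      then have za: "\<forall>s\<in>Sa. k s = 0" using Sa(5) by (simp add: indepB_def)
      then have "lc Sa k = 0" using lc_cong[of Sa k "\<lambda>_. 0"] by simp
      then have "lc Sb k \<in> P" using k lcU by simp
      then have "\<forall>s\<in>Sb. k s = 0" using Sb(5) by (simp add: indepB_def)
      then show "k s = 0" using za s by blast
    qed
  qed
qed

lemma dimq_split:
  assumes "sub P" "sub Q" "sub R" "P \<subseteq> Q" "Q \<subseteq> R" "dimq R P n"
  shows "\<exists>a b. dimq R Q a \<and> dimq Q P b \<and> a + b = n"
proof -
  obtain S where S: "S \<subseteq> R" "finite S" "card S = n" "R \<subseteq> spanB P S" "indepB P S"
    using assms(6) unfolding dimq_def by blast
  have "R \<subseteq> spanB Q S" using S spanB_mono[OF assms(2) assms(4) S(2)] by blast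
  then obtain a where a: "dimq R Q a" using dimq_exists[OF assms(3) assms(2) assms(5) S(2)] by blast
  obtain b where b: "dimq Q P b" using dimq_exists[OF assms(2) assms(1) assms(4) S(2)] S(4) assms(5) by blast
  have "dimq R P (a + b)" by (rule dimq_tower[OF assms(1,2,4,5) a b])
  then have "a + b = n" using dimq_unique[OF assms(1)] assms(6) by blast
  then show ?thesis using a b by blast
qed

lemma dimq_refl: "sub A \<Longrightarrow> dimq A A 0"
  unfolding dimq_def by (auto intro!: exI[of _ "{}"] simp: spanB_empty indepB_def)

lemma sub_ssum: "sub X \<Longrightarrow> sub Y \<Longrightarrow> sub (ssum X Y)"
  unfolding subspace_def ssum_def
  apply (intro conjI ballI allI)
    apply (metis (mono_tags, lifting) add_0 mem_Collect_eq)
   apply (smt (verit, best) add.assoc add.left_commute mem_Collect_eq)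
  using sm_add_right by fastforce

lemma ssum_comm: "ssum X Y = ssum Y X"
  unfolding ssum_def by (auto; metis add.commute)
lemma ssum_assoc: "ssum (ssum X Y) Z = ssum X (ssum Y Z)"
  unfolding ssum_def by (auto simp: add.assoc) (metis add.assoc)+
lemma ssum_left: "sub Y \<Longrightarrow> X \<subseteq> ssum X Y"
  unfolding ssum_def using sub0 by force
lemma ssum_right: "sub X \<Longrightarrow> Y \<subseteq> ssum X Y"
  unfolding ssum_def using sub0 by force
lemma ssum_min: "sub Z \<Longrightarrow> X \<subseteq> Z \<Longrightarrow> Y \<subseteq> Z \<Longrightarrow> ssum X Y \<subseteq> Z"
  unfolding ssum_def using sub_add by blast
lemma ssum_mono: "X \<subseteq> X' \<Longrightarrow> Y \<subseteq> Y' \<Longrightarrow> ssum X Y \<subseteq> ssum X' Y'"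
  unfolding ssum_def by blast
lemma ssum_idem: "sub X \<Longrightarrow> ssum X X = X"
  using ssum_left[of X X] ssum_min[of X X X] by blast

lemma dimq_ssum:
  assumes "sub P" "sub Q" "sub T" "P \<subseteq> Q" "dimq Q P n"
  shows "\<exists>m \<le> n. dimq (ssum Q T) (ssum P T) m"
proof -
  obtain S where S: "S \<subseteq> Q" "finite S" "card S = n" "Q \<subseteq> spanB P S" "indepB P S"
    using assms(5) unfolding dimq_def by blast
  have "ssum Q T \<subseteq> spanB (ssum P T) S"
  proof
    fix x assume "x \<in> ssum Q T"
    then obtain q t where "q \<in> Q" "t \<in> T" "x = q + t" unfolding ssum_def by blast
    moreover then obtain c p where "p \<in> P" "q = lc S c + p" using S(4) unfolding spanB_def by blast
    ultimately have "x = lc S c + (p + t)" "p + t \<in> ssum P T" unfolding ssum_def by (auto simp: add.assoc)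
    then show "x \<in> spanB (ssum P T) S" by (auto intro: spanB_I)
  qed
  then show ?thesis
    using dimq_exists[OF sub_ssum[OF assms(2,3)] sub_ssum[OF assms(1,3)] ssum_mono[OF assms(4)] S(2)] S(3)
    by blast
qed

lemma dimq_second_iso1:
  assumes "sub X" "sub Y" "dimq Y (X \<inter> Y) n"
  shows "dimq (ssum X Y) X n"
proof -
  obtain S where S: "S \<subseteq> Y" "finite S" "card S = n" "Y \<subseteq> spanB (X \<inter> Y) S" "indepB (X \<inter> Y) S"
    using assms(3) unfolding dimq_def by blast
  show ?thesis unfolding dimq_def
  proof (intro exI[of _ S] conjI)
    show "S \<subseteq> ssum X Y" using S(1) ssum_right[OF assms(1)] by blast
    show "finite S" "card S = n" using S by auto
    show "ssum X Y \<subseteq> spanB X S"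
    proof
      fix z assume "z \<in> ssum X Y"
      then obtain x y where xy: "x \<in> X" "y \<in> Y" "z = x + y" unfolding ssum_def by blast
      then obtain c w where "w \<in> X \<inter> Y" "y = lc S c + w" using S(4) unfolding spanB_def by blast
      then have "z = lc S c + (x + w)" "x + w \<in> X" using xy assms(1) by (auto simp: sub_add algebra_simps)
      then show "z \<in> spanB X S" by (auto intro: spanB_I)
    qed
    show "indepB X S" unfolding indepB_def
    proof (intro conjI allI impI)
      show "finite S" by fact
      fix c assume "lc S c \<in> X"
      moreover have "lc S c \<in> Y" using sub_lc[OF assms(2) S(1)] .
      ultimately show "\<forall>s\<in>S. c s = 0" using S(5) by (simp add: indepB_def)
    qed
  qed
qed

lemma dimq_second_iso:
  assumes "sub X" "sub Y"
  shows "dimq (ssum X Y) X n \<longleftrightarrow> dimq Y (X \<inter> Y) n"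
proof
  assume "dimq Y (X \<inter> Y) n" then show "dimq (ssum X Y) X n" using dimq_second_iso1 assms by blast
next
  assume h: "dimq (ssum X Y) X n"
  obtain S where S: "S \<subseteq> ssum X Y" "finite S" "card S = n" "ssum X Y \<subseteq> spanB X S" "indepB X S"
    using h unfolding dimq_def by blast
  have "\<forall>s\<in>S. \<exists>p. fst p \<in> X \<and> snd p \<in> Y \<and> s = fst p + snd p"
    using S(1) unfolding ssum_def by force
  then obtain pp where pp: "\<And>s. s \<in> S \<Longrightarrow> fst (pp s) \<in> X \<and> snd (pp s) \<in> Y \<and> s = fst (pp s) + snd (pp s)"
    by (metis bchoice)
  define yp where "yp s = snd (pp s)" for s
  define xp where "xp s = fst (pp s)" for s
  have Ysp: "Y \<subseteq> spanB (X \<inter> Y) (yp ` S)"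
  proof
    fix y assume y: "y \<in> Y"
    then have "y \<in> ssum X Y" using ssum_right[OF assms(1)] by blast
    then obtain c x where x: "x \<in> X" "y = lc S c + x" using S(4) unfolding spanB_def by blast
    have decomp: "lc S c = (\<Sum>s\<in>S. sm (c s) (yp s)) + (\<Sum>s\<in>S. sm (c s) (xp s))"
    proof -
      have "lc S c = (\<Sum>s\<in>S. sm (c s) (xp s + yp s))"
        unfolding lc_def by (rule sum.cong) (use pp in \<open>auto simp: xp_def yp_def\<close>)
      then show ?thesis by (simp add: sm_add_right sum.distrib add.commute)
    qed
    have ysum: "(\<Sum>s\<in>S. sm (c s) (yp s)) \<in> spanB (X \<inter> Y) (yp ` S)"
    proof (rule sub_sum[OF sub_spanB[OF sub_inter[OF assms]]])
      fix i assume "i \<in> S"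
      then have "yp i \<in> spanB (X \<inter> Y) (yp ` S)"
        using spanB_S[OF finite_imageI[OF S(2)] sub_inter[OF assms], of yp] by blast
      then show "sm (c i) (yp i) \<in> spanB (X \<inter> Y) (yp ` S)"
        using sub_sm[OF sub_spanB[OF sub_inter[OF assms]]] by blast
    qed
    have xsum: "(\<Sum>s\<in>S. sm (c s) (xp s)) \<in> X"
      by (rule sub_sum[OF assms(1)]) (use pp in \<open>auto intro!: sub_sm[OF assms(1)] simp: xp_def\<close>)
    have ysY: "(\<Sum>s\<in>S. sm (c s) (yp s)) \<in> Y"
      by (rule sub_sum[OF assms(2)]) (use pp in \<open>auto intro!: sub_sm[OF assms(2)] simp: yp_def\<close>)
    define r where "r = (\<Sum>s\<in>S. sm (c s) (xp s)) + x"
    have rX: "r \<in> X" using xsum x assms(1) by (simp add: r_def sub_add)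
    have yeq: "y = (\<Sum>s\<in>S. sm (c s) (yp s)) + r" using x decomp by (simp add: r_def add.assoc)
    have "r \<in> Y" using yeq y ysY assms(2) by (metis add_diff_cancel_left' sub_diff)
    then have "r \<in> spanB (X \<inter> Y) (yp ` S)" using rX spanB_B[OF sub_inter[OF assms]] by blast
    then show "y \<in> spanB (X \<inter> Y) (yp ` S)" using ysum yeq sub_spanB[OF sub_inter[OF assms]] sub_add by metis
  qed
  obtain m where m: "dimq Y (X \<inter> Y) m"
    using dimq_exists[OF assms(2) sub_inter[OF assms] _ _ Ysp] S(2) by blast
  then have "dimq (ssum X Y) X m" using dimq_second_iso1 assms by blast
  then have "m = n" using dimq_unique[OF assms(1)] h by blast
  then show "dimq Y (X \<inter> Y) n" using m by simp
qed

end


context lvs begin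

lemma qdim_dimq:
  assumes "sub B"
  shows "qdim_eq sm A B n \<longleftrightarrow> dimq A B n"
proof
  assume "qdim_eq sm A B n"
  then obtain v where v: "\<forall>i<n. v i \<in> A"
    "\<forall>a\<in>A. \<exists>c. \<exists>b\<in>B. a = (\<Sum>i<n. sm (c i) (v i)) + b"
    "\<forall>c. (\<Sum>i<n. sm (c i) (v i)) \<in> B \<longrightarrow> (\<forall>i<n. c i = 0)"
    unfolding qdim_eq_def by blast
  have inj: "inj_on v {..<n}"
  proof (rule inj_onI, rule ccontr)
    fix i j assume ij: "i \<in> {..<n}" "j \<in> {..<n}" "v i = v j" "i \<noteq> j"
    define c where "c l = (if l = i then 1 else if l = j then -1 else (0::'k))" for l
    have "(\<Sum>l<n. sm (c l) (v l)) = (\<Sum>l\<in>{i,j}. sm (c l) (v l))"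
      by (rule sum.mono_neutral_right) (use ij in \<open>auto simp: c_def\<close>)
    also have "\<dots> = 0" using ij by (simp add: c_def sm_minus_left)
    finally have "c i = 0" using v(3) sub0[OF assms] ij by auto
    then show False by (simp add: c_def)
  qed
  define S where "S = v ` {..<n}"
  have lcS: "lc S c = (\<Sum>i<n. sm (c (v i)) (v i))" for c
    unfolding S_def using inj by (simp add: lc_image)
  show "dimq A B n" unfolding dimq_def
  proof (intro exI[of _ S] conjI)
    show "S \<subseteq> A" "finite S" "card S = n" using v(1) inj by (auto simp: S_def card_image)
    show "A \<subseteq> spanB B S"
    proof
      fix a assume "a \<in> A"
      then obtain c b where cb: "b \<in> B" "a = (\<Sum>i<n. sm (c i) (v i)) + b" using v(2) by blast
      define c' where "c' s = c (the_inv_into {..<n} v s)" for s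
      have "(\<Sum>i<n. sm (c i) (v i)) = lc S c'"
        unfolding lcS c'_def by (rule sum.cong) (auto simp: the_inv_into_f_f[OF inj])
      then show "a \<in> spanB B S" using cb by (auto intro: spanB_I)
    qed
    show "indepB B S" unfolding indepB_def
    proof (intro conjI allI impI ballI)
      show "finite S" by (simp add: S_def)
      fix c s assume "lc S c \<in> B" "s \<in> S"
      then show "c s = 0" using v(3)[rule_format, of "\<lambda>i. c (v i)"] lcS by (auto simp: S_def)
    qed
  qed
next
  assume "dimq A B n"
  then obtain S where S: "S \<subseteq> A" "finite S" "card S = n" "A \<subseteq> spanB B S" "indepB B S"
    unfolding dimq_def by blast
  obtain h where h: "bij_betw h {0..<n} S" using ex_bij_betw_nat_finite[OF S(2)] S(3) by blast
  have hS: "h ` {..<n} = S" and inj: "inj_on h {..<n}" using h by (auto simp: bij_betw_def atLeast0LessThan)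
  have lcS: "lc S c = (\<Sum>i<n. sm (c (h i)) (h i))" for c
    unfolding hS[symmetric] using inj by (simp add: lc_image)
  show "qdim_eq sm A B n" unfolding qdim_eq_def
  proof (intro exI[of _ h] conjI allI impI ballI)
    show "\<And>i. i < n \<Longrightarrow> h i \<in> A" using hS S(1) by auto
    fix a assume "a \<in> A"
    then obtain c b where "b \<in> B" "a = lc S c + b" using S(4) unfolding spanB_def by blast
    then show "\<exists>c. \<exists>b\<in>B. a = (\<Sum>i<n. sm (c i) (h i)) + b"
      using lcS[of c] by (intro exI[of _ "\<lambda>i. c (h i)"] bexI[of _ b]) auto
  next
    fix c i assume c: "(\<Sum>i<n. sm (c i) (h i)) \<in> B" and i: "i < n"
    define c' where "c' s = c (inv_into {..<n} h s)" for s
    have "lc S c' = (\<Sum>i<n. sm (c i) (h i))"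
      unfolding lcS c'_def by (rule sum.cong) (auto simp: inv_into_f_f[OF inj])
    then have "\<forall>s\<in>S. c' s = 0" using c S(5) by (simp add: indepB_def)
    then show "c i = 0" using i hS inv_into_f_f[OF inj] by (auto simp: c'_def)
  qed
qed

definition rel :: "'v set \<Rightarrow> 'v set \<Rightarrow> nat \<Rightarrow> bool" where
  "rel X Y a \<longleftrightarrow> dimq (ssum X Y) X a \<and> dimq (ssum X Y) Y a"

lemma rel_step:
  assumes sX: "sub X" and sY: "sub Y" and sZ: "sub Z" and r1: "rel X Y a" and r2: "rel Y Z 1"
  shows "\<exists>b \<le> a + 1. rel X Z b"
proof -
  define XY where "XY = ssum X Y"
  define YZ where "YZ = ssum Y Z"
  define XZ where "XZ = ssum X Z"
  define U where "U = ssum XY Z"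
  have sXY: "sub XY" "sub YZ" "sub XZ" "sub U"
    using sX sY sZ by (simp_all add: XY_def YZ_def XZ_def U_def sub_ssum)
  have U1: "U = ssum YZ X" unfolding U_def XY_def YZ_def
    by (metis ssum_assoc ssum_comm)
  have U2: "U = ssum XZ Y" unfolding U_def XY_def XZ_def
    by (metis ssum_assoc ssum_comm)
  have XYsub: "X \<subseteq> XY" "Y \<subseteq> XY" "XY \<subseteq> U" using sX sY sZ sXY
    by (simp_all add: XY_def U_def ssum_left ssum_right)
  have YZsub: "Y \<subseteq> YZ" "Z \<subseteq> YZ" "YZ \<subseteq> U" using sX sY sZ sXY
    by (simp_all add: YZ_def U1 ssum_left ssum_right)
  have XZsub: "X \<subseteq> XZ" "Z \<subseteq> XZ" "XZ \<subseteq> U" using sX sY sZ sXY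
    by (simp_all add: XZ_def U2 ssum_left ssum_right)
  have a1: "dimq XY X a" "dimq XY Y a" using r1 by (auto simp: rel_def XY_def)
  have o1: "dimq YZ Y 1" "dimq YZ Z 1" using r2 by (auto simp: rel_def YZ_def)
  obtain e where e: "e \<le> 1" "dimq (ssum YZ X) (ssum Y X) e"
    using dimq_ssum[OF sY sXY(2) sX YZsub(1) o1(1)] by blast
  have eU: "dimq U XY e" using e(2) by (simp add: U1 XY_def ssum_comm)
  have uX: "dimq U X (e + a)" by (rule dimq_tower[OF sX sXY(1) XYsub(1) XYsub(3) eU a1(1)])
  have uY: "dimq U Y (e + a)" by (rule dimq_tower[OF sY sXY(1) XYsub(2) XYsub(3) eU a1(2)])
  obtain f g where fg: "dimq U YZ f" "dimq YZ Y g" "f + g = e + a"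
    using dimq_split[OF sY sXY(2) sXY(4) YZsub(1) YZsub(3) uY] by blast
  have "g = 1" using dimq_unique[OF sY fg(2) o1(1)] .
  have uZ: "dimq U Z (f + 1)" by (rule dimq_tower[OF sZ sXY(2) YZsub(2) YZsub(3) fg(1) o1(2)])
  obtain f1 b1 where fb1: "dimq U XZ f1" "dimq XZ X b1" "f1 + b1 = e + a"
    using dimq_split[OF sX sXY(3) sXY(4) XZsub(1) XZsub(3) uX] by blast
  obtain f2 b2 where fb2: "dimq U XZ f2" "dimq XZ Z b2" "f2 + b2 = f + 1"
    using dimq_split[OF sZ sXY(3) sXY(4) XZsub(2) XZsub(3) uZ] by blast
  have "f1 = f2" using dimq_unique[OF sXY(3) fb1(1) fb2(1)] .
  then have "b1 = b2" using fb1(3) fb2(3) fg(3) \<open>g = 1\<close> by simp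
  then have "rel X Z b1" using fb1 fb2 by (simp add: rel_def XZ_def)
  moreover have "b1 \<le> a + 1" using fb1(3) e(1) by simp
  ultimately show ?thesis by blast
qed

lemma Gr_sub: "X \<in> Gr sm \<Longrightarrow> sub X" by (simp add: Gr_def)

lemma walk_rel:
  assumes "gwalk sm X Y n"
  shows "\<exists>b \<le> n. rel X Y b"
proof -
  obtain p where p: "p 0 = X" "p n = Y" "\<forall>i\<le>n. p i \<in> Gr sm"
    "\<forall>i<n. adjacent sm (p i) (p (Suc i))"
    using assms unfolding gwalk_def by blast
  have "k \<le> n \<Longrightarrow> \<exists>b \<le> k. rel X (p k) b" for k
  proof (induction k)
    case 0
    have "sub X" using p Gr_sub by auto
    then show ?case using p(1) by (auto simp: rel_def ssum_idem dimq_refl)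
  next
    case (Suc k)
    then obtain b where b: "b \<le> k" "rel X (p k) b" by auto
    have s: "sub (p k)" "sub (p (Suc k))" "sub X" using p Gr_sub Suc.prems by (auto)
    have "adjacent sm (p k) (p (Suc k))" using p(4) Suc.prems by auto
    then have "rel (p k) (p (Suc k)) 1"
      unfolding adjacent_def rel_def
      using qdim_dimq s by auto
    then obtain b' where "b' \<le> b + 1" "rel X (p (Suc k)) b'"
      using rel_step[OF s(3) s(1) s(2) b(2)] by blast
    then show ?case using b by (intro exI[of _ b']) auto
  qed
  then show ?thesis using p(2) by blast
qed

end


context lvs begin

lemma complement_exists:
  assumes sW: "sub W" and T: "indepB W T"
  shows "\<exists>C. sub C \<and> W \<subseteq> C \<and> indepB C T \<and> spanB C T = UNIV"
proof -
  have finT: "finite T" using T by (simp add: indepB_def)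
  define F where "F = {C. sub C \<and> W \<subseteq> C \<and> indepB C T}"
  have WF: "W \<in> F" using sW T by (simp add: F_def)
  have "\<forall>Ch\<in>chains F. \<exists>U\<in>F. \<forall>X\<in>Ch. X \<subseteq> U"
  proof
    fix Ch assume Ch: "Ch \<in> chains F"
    show "\<exists>U\<in>F. \<forall>X\<in>Ch. X \<subseteq> U"
    proof (cases "Ch = {}")
      case True then show ?thesis using WF by blast
    next
      case False
      have sub_ch: "Ch \<subseteq> F" and ch: "\<forall>A\<in>Ch. \<forall>B\<in>Ch. A \<subseteq> B \<or> B \<subseteq> A"
        using Ch unfolding chains_def chain_subset_def by auto
      have "\<Union>Ch \<in> F" unfolding F_def
      proof (intro CollectI conjI)
        show "sub (\<Union>Ch)" unfolding subspace_def
        proof (intro conjI ballI allI)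
          show "0 \<in> \<Union>Ch" using False sub_ch sub0 by (auto simp: F_def)
          fix x y assume "x \<in> \<Union>Ch" "y \<in> \<Union>Ch"
          then obtain A B where "A \<in> Ch" "B \<in> Ch" "x \<in> A" "y \<in> B" by auto
          moreover have "sub A" "sub B" using \<open>A \<in> Ch\<close> \<open>B \<in> Ch\<close> sub_ch by (auto simp: F_def)
          ultimately show "x + y \<in> \<Union>Ch"
          proof (cases "A \<subseteq> B")
            case True
            then have "x + y \<in> B" using sub_add[OF \<open>sub B\<close>] \<open>x \<in> A\<close> \<open>y \<in> B\<close> by blast
            then show ?thesis using \<open>B \<in> Ch\<close> by blast
          next
            case False
            then have "B \<subseteq> A" using ch \<open>A \<in> Ch\<close> \<open>B \<in> Ch\<close> by blast
            then have "x + y \<in> A" using sub_add[OF \<open>sub A\<close>] \<open>x \<in> A\<close> \<open>y \<in> B\<close> by blast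
            then show ?thesis using \<open>A \<in> Ch\<close> by blast
          qed
        next
          fix a x assume "x \<in> \<Union>Ch"
          then obtain A where "A \<in> Ch" "x \<in> A" by auto
          then show "sm a x \<in> \<Union>Ch" using sub_ch sub_sm unfolding F_def by blast
        qed
        show "W \<subseteq> \<Union>Ch" using False sub_ch by (auto simp: F_def)
        show "indepB (\<Union>Ch) T" unfolding indepB_def
        proof (intro conjI allI impI)
          show "finite T" by fact
          fix c assume "lc T c \<in> \<Union>Ch"
          then obtain A where "A \<in> Ch" "lc T c \<in> A" by auto
          then show "\<forall>s\<in>T. c s = 0" using sub_ch by (auto simp: F_def indepB_def)
        qed
      qed
      then show ?thesis by blast
    qed
  qed
  then obtain M where M: "M \<in> F" "\<forall>X\<in>F. M \<subseteq> X \<longrightarrow> X = M"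
    using Zorn_Lemma2[of F] by blast
  have sM: "sub M" and WM: "W \<subseteq> M" and iM: "indepB M T" using M(1) by (auto simp: F_def)
  have "spanB M T = UNIV"
  proof (rule ccontr)
    assume "spanB M T \<noteq> UNIV"
    then obtain v where v: "v \<notin> spanB M T" by auto
    define M' where "M' = spanB M {v}"
    have sM': "sub M'" using sub_spanB[OF sM] by (simp add: M'_def)
    have MM': "M \<subseteq> M'" using spanB_B[OF sM] by (simp add: M'_def)
    have "indepB M' T" unfolding indepB_def
    proof (intro conjI allI impI)
      show "finite T" by fact
      fix c assume "lc T c \<in> M'"
      then obtain k m where km: "m \<in> M" "lc T c = lc {v} k + m" unfolding M'_def spanB_def by blast
      have eq: "lc T c = sm (k v) v + m" using km by (simp add: lc_def)
      have "k v = 0"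
      proof (rule ccontr)
        assume ne: "k v \<noteq> 0"
        have "v = sm (inverse (k v)) (lc T c - m)" using eq sm_inv[OF ne] by simp
        moreover have "lc T c - m \<in> spanB M T"
          using sub_diff[OF sub_spanB[OF sM]] spanB_B[OF sM] km(1)
            sub_lc[OF sub_spanB[OF sM] spanB_S[OF finT sM]] by blast
        then have "sm (inverse (k v)) (lc T c - m) \<in> spanB M T" by (rule sub_sm[OF sub_spanB[OF sM]])
        ultimately show False using v by simp
      qed
      then have "lc T c \<in> M" using eq km(1) by simp
      then show "\<forall>s\<in>T. c s = 0" using iM by (simp add: indepB_def)
    qed
    then have "M' \<in> F" using sM' MM' WM by (auto simp: F_def)
    then have "M' = M" using M(2) MM' by blast
    moreover have "v \<in> M'" using spanB_S[of "{v}" M] sM by (simp add: M'_def)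
    ultimately have "v \<in> M" by simp
    then show False using v spanB_B[OF sM] by blast
  qed
  then show ?thesis using sM WM iM by blast
qed

definition linmap :: "('v \<Rightarrow> 'v) \<Rightarrow> bool" where
  "linmap \<phi> \<longleftrightarrow> (\<forall>a u v. \<phi> (sm a u + v) = sm a (\<phi> u) + \<phi> v)"

lemma linmap_add: "linmap \<phi> \<Longrightarrow> \<phi> (u + v) = \<phi> u + \<phi> v"
  unfolding linmap_def by (drule spec[of _ 1]) simp
lemma linmap_0: "linmap \<phi> \<Longrightarrow> \<phi> 0 = 0"
  using linmap_add[of \<phi> 0 0] by simp
lemma linmap_sm: "linmap \<phi> \<Longrightarrow> \<phi> (sm a u) = sm a (\<phi> u)"
proof -
  assume l: "linmap \<phi>"
  then show ?thesis using l[unfolded linmap_def, rule_format, of a u 0] linmap_0[OF l] by simp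
qed
lemma linmap_sum: "linmap \<phi> \<Longrightarrow> \<phi> (sum f I) = (\<Sum>i\<in>I. \<phi> (f i))"
  by (induction I rule: infinite_finite_induct) (auto simp: linmap_0 linmap_add)
lemma linmap_lc: "linmap \<phi> \<Longrightarrow> \<phi> (lc A c) = (\<Sum>t\<in>A. sm (c t) (\<phi> t))"
  unfolding lc_def by (simp add: linmap_sum linmap_sm)

lemma ag_id: "(x + y) - (p + q) + (r + s) = (x - p + r) + (y - q + (s::'a::ab_group_add))"
  by (simp add: algebra_simps)

lemma swap_map_exists:
  assumes sC: "sub C" and iT: "indepB C T" and spT: "spanB C T = UNIV"
    and tT: "\<And>t. t \<in> T \<Longrightarrow> \<tau> t \<in> T" and tt: "\<And>t. t \<in> T \<Longrightarrow> \<tau> (\<tau> t) = t"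
  shows "\<exists>\<phi>. linmap \<phi> \<and> (\<forall>v. \<phi> (\<phi> v) = v) \<and> (\<forall>c\<in>C. \<phi> c = c) \<and> (\<forall>t\<in>T. \<phi> t = \<tau> t)"
proof -
  have finT: "finite T" using iT by (simp add: indepB_def)
  have ex: "\<exists>k. v - lc T k \<in> C" for v
  proof -
    have "v \<in> spanB C T" using spT by simp
    then obtain k c where "c \<in> C" "v = lc T k + c" unfolding spanB_def by blast
    then show ?thesis by (intro exI[of _ k]) (simp add: add_diff_cancel_left')
  qed
  define co where "co v = (SOME k. v - lc T k \<in> C)" for v
  have co: "v - lc T (co v) \<in> C" for v unfolding co_def using someI_ex[OF ex] .
  have uniq: "\<And>t. t \<in> T \<Longrightarrow> co v t = k t" if "v - lc T k \<in> C" for v k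
  proof -
    have "(v - lc T k) - (v - lc T (co v)) \<in> C" using that co sub_diff[OF sC] by blast
    then have "lc T (\<lambda>t. co v t - k t) \<in> C" by (simp add: lc_diff[symmetric])
    then show "\<And>t. t \<in> T \<Longrightarrow> co v t = k t" using iT by (auto simp: indepB_def)
  qed
  have reidx: "(\<Sum>t\<in>T. sm (k t) (\<tau> t)) = lc T (\<lambda>t. k (\<tau> t))" for k
  proof -
    have bij: "bij_betw \<tau> T T"
      by (rule bij_betw_byWitness[of _ \<tau>]) (use tT tt in auto)
    have "lc T (\<lambda>t. k (\<tau> t)) = (\<Sum>u\<in>T. sm (k (\<tau> u)) u)"
      by (simp add: lc_def)
    also have "\<dots> = (\<Sum>t\<in>T. sm (k (\<tau> (\<tau> t))) (\<tau> t))"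
      by (rule sum.reindex_bij_betw[OF bij, symmetric])
    also have "\<dots> = (\<Sum>t\<in>T. sm (k t) (\<tau> t))" using tt by simp
    finally show ?thesis by simp
  qed
  define \<phi> where "\<phi> v = v - lc T (co v) + lc T (\<lambda>t. co v (\<tau> t))" for v
  have lcco: "lc T (co v) = lc T k" "lc T (\<lambda>t. co v (\<tau> t)) = lc T (\<lambda>t. k (\<tau> t))"
    if "v - lc T k \<in> C" for v k
    using uniq[OF that] tT by (auto intro: lc_cong)
  have lin: "linmap \<phi>" unfolding linmap_def
  proof (intro allI)
    fix a u v
    define k where "k = (\<lambda>t. a * co u t + co v t)"
    have lk: "lc T k = sm a (lc T (co u)) + lc T (co v)"
      by (simp add: k_def lc_sm lc_add)
    have lkt: "lc T (\<lambda>t. k (\<tau> t)) = sm a (lc T (\<lambda>t. co u (\<tau> t))) + lc T (\<lambda>t. co v (\<tau> t))"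
      by (simp add: k_def lc_sm lc_add)
    have eqk: "sm a u + v - lc T k = sm a (u - lc T (co u)) + (v - lc T (co v))"
      by (simp only: lk add_diff_add sm_diff_right)
    have kC: "sm a u + v - lc T k \<in> C" unfolding eqk by (intro sub_add[OF sC] sub_sm[OF sC] co)
    have "\<phi> (sm a u + v) = sm a u + v - lc T k + lc T (\<lambda>t. k (\<tau> t))"
      unfolding \<phi>_def using lcco[OF kC] by simp
    also have "\<dots> = sm a (\<phi> u) + \<phi> v"
      unfolding \<phi>_def lk lkt sm_add_right sm_diff_right by (rule ag_id)
    finally show "\<phi> (sm a u + v) = sm a (\<phi> u) + \<phi> v" .
  qed
  have inv: "\<phi> (\<phi> v) = v" for v
  proof -
    have "\<phi> v - lc T (\<lambda>t. co v (\<tau> t)) = v - lc T (co v)" by (simp add: \<phi>_def)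
    then have h: "\<phi> v - lc T (\<lambda>t. co v (\<tau> t)) \<in> C" using co by simp
    have "lc T (\<lambda>t. co v (\<tau> (\<tau> t))) = lc T (co v)" by (rule lc_cong) (simp add: tt)
    then show ?thesis using lcco[OF h] by (simp add: \<phi>_def)
  qed
  have fixC: "\<phi> c = c" if "c \<in> C" for c
  proof -
    have "c - lc T (\<lambda>_. 0) \<in> C" using that by simp
    from lcco[OF this] show ?thesis by (simp add: \<phi>_def)
  qed
  have onT: "\<phi> t = \<tau> t" if t: "t \<in> T" for t
  proof -
    have "t - lc T (\<lambda>u. if u = t then 1 else 0) \<in> C" using lc_indicator[OF finT t] sub0[OF sC] by simp
    from lcco[OF this] have "\<phi> t = t - t + lc T (\<lambda>u. if \<tau> u = t then 1 else 0)"
      using lc_indicator[OF finT t] by (simp add: \<phi>_def)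
    also have "lc T (\<lambda>u. if \<tau> u = t then 1 else 0) = lc T (\<lambda>u. if u = \<tau> t then 1 else 0)"
    proof (rule lc_cong)
      fix s assume s: "s \<in> T"
      have "\<tau> s = t \<longleftrightarrow> s = \<tau> t" using tt[OF s] tt[OF t] by auto
      then show "(if \<tau> s = t then 1 else 0) = (if s = \<tau> t then 1 else (0::'k))" by simp
    qed
    also have "\<dots> = \<tau> t" using lc_indicator[OF finT tT[OF t]] .
    finally show ?thesis by simp
  qed
  show ?thesis using lin inv fixC onT by blast
qed

lemma transport_Gr:
  assumes lin: "linmap \<phi>" and inv: "\<And>v. \<phi> (\<phi> v) = v" and X: "X \<in> Gr sm"
  shows "\<phi> ` X \<in> Gr sm"
proof -
  define Z where "Z = \<phi> ` X"
  have sX: "sub X" using X by (simp add: Gr_def)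
  have injphi: "inj \<phi>"
  proof (rule injI)
    fix x y assume "\<phi> x = \<phi> y"
    then have "\<phi> (\<phi> x) = \<phi> (\<phi> y)" by simp
    then show "x = y" using inv by simp
  qed
  have sZ: "sub Z" unfolding subspace_def Z_def
  proof (intro conjI ballI allI)
    show "0 \<in> \<phi> ` X" by (rule rev_image_eqI[of 0]) (use linmap_0[OF lin] sub0[OF sX] in auto)
    fix x y assume "x \<in> \<phi> ` X" "y \<in> \<phi> ` X"
    then obtain x0 y0 where "x0 \<in> X" "y0 \<in> X" "x = \<phi> x0" "y = \<phi> y0" by auto
    then show "x + y \<in> \<phi> ` X"
      by (intro rev_image_eqI[of "x0 + y0"]) (auto simp: linmap_add[OF lin] sub_add[OF sX])
  next
    fix a x assume "x \<in> \<phi> ` X"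
    then obtain x0 where "x0 \<in> X" "x = \<phi> x0" by auto
    then show "sm a x \<in> \<phi> ` X"
      by (intro rev_image_eqI[of "sm a x0"]) (auto simp: linmap_sm[OF lin] sub_sm[OF sX])
  qed
  have cos: "\<phi> ` coset X w = coset Z (\<phi> w)" for w
    unfolding coset_def Z_def by (auto simp: linmap_add[OF lin] image_image)
  obtain g where g: "bij_betw g X (range (coset X))"
    "\<forall>a\<in>X. \<forall>b\<in>X. \<forall>c. \<forall>u\<in>g a. \<forall>w\<in>g b. g (sm c a + b) = coset X (sm c u + w)"
    using X unfolding Gr_def iso_to_quotient_def by blast
  define g' where "g' z = \<phi> ` g (\<phi> z)" for z
  have phiZ: "z \<in> Z \<Longrightarrow> \<phi> z \<in> X" for z unfolding Z_def using inv by auto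
  have "iso_to_quotient sm Z" unfolding iso_to_quotient_def
  proof (intro exI[of _ g'] conjI)
    show "bij_betw g' Z (range (coset Z))" unfolding bij_betw_def
    proof
      show "inj_on g' Z"
      proof (rule inj_onI)
        fix z1 z2 assume z: "z1 \<in> Z" "z2 \<in> Z" "g' z1 = g' z2"
        then have "g (\<phi> z1) = g (\<phi> z2)" unfolding g'_def using injphi by (simp add: inj_image_eq_iff)
        then have "\<phi> z1 = \<phi> z2" using g(1) phiZ z unfolding bij_betw_def inj_on_def by blast
        then show "z1 = z2" using injphi by (simp add: inj_eq)
      qed
      show "g' ` Z = range (coset Z)"
      proof
        show "g' ` Z \<subseteq> range (coset Z)"
        proof
          fix K assume "K \<in> g' ` Z"
          then obtain z where "z \<in> Z" "K = \<phi> ` g (\<phi> z)" unfolding g'_def by blast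
          moreover obtain w where "g (\<phi> z) = coset X w" using g(1) phiZ[OF \<open>z \<in> Z\<close>]
            unfolding bij_betw_def by blast
          ultimately show "K \<in> range (coset Z)" using cos by auto
        qed
        show "range (coset Z) \<subseteq> g' ` Z"
        proof
          fix K assume "K \<in> range (coset Z)"
          then obtain w where w: "K = coset Z w" by blast
          have "coset X (\<phi> w) \<in> g ` X" using g(1) unfolding bij_betw_def by simp
          then obtain x where x: "x \<in> X" "g x = coset X (\<phi> w)" by (auto simp: image_iff)
          have "g' (\<phi> x) = K" unfolding g'_def using x cos inv w by simp
          moreover have "\<phi> x \<in> Z" using x by (simp add: Z_def)
          ultimately show "K \<in> g' ` Z" by blast
        qed
      qed
    qed
    show "\<forall>a\<in>Z. \<forall>b\<in>Z. \<forall>c. \<forall>u\<in>g' a. \<forall>w\<in>g' b. g' (sm c a + b) = coset Z (sm c u + w)"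
    proof (intro ballI allI)
      fix a b c u w assume ab: "a \<in> Z" "b \<in> Z" and u: "u \<in> g' a" and w: "w \<in> g' b"
      obtain u0 where u0: "u0 \<in> g (\<phi> a)" "u = \<phi> u0" using u unfolding g'_def by blast
      obtain w0 where w0: "w0 \<in> g (\<phi> b)" "w = \<phi> w0" using w unfolding g'_def by blast
      have "g' (sm c a + b) = \<phi> ` g (sm c (\<phi> a) + \<phi> b)"
        unfolding g'_def using lin by (simp add: linmap_def)
      also have "\<dots> = \<phi> ` coset X (sm c u0 + w0)" using g(2) phiZ ab u0 w0 by simp
      also have "\<dots> = coset Z (sm c u + w)" using cos lin u0 w0 by (simp add: linmap_def)
      finally show "g' (sm c a + b) = coset Z (sm c u + w)" .
    qed
  qed
  then show ?thesis using sZ by (simp add: Gr_def Z_def)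
qed

lemma image_spanB:
  assumes lin: "linmap \<phi>" and fixW: "\<And>w. w \<in> W \<Longrightarrow> \<phi> w = w"
    and onA: "\<And>t. t \<in> A \<Longrightarrow> \<phi> t = \<tau> t" and inj: "inj_on \<tau> A"
  shows "\<phi> ` spanB W A = spanB W (\<tau> ` A)"
proof
  show "\<phi> ` spanB W A \<subseteq> spanB W (\<tau> ` A)"
  proof
    fix y assume "y \<in> \<phi> ` spanB W A"
    then obtain c w where cw: "w \<in> W" "y = \<phi> (lc A c + w)" unfolding spanB_def by blast
    have "y = (\<Sum>t\<in>A. sm (c t) (\<tau> t)) + w"
      using cw by (simp add: linmap_add[OF lin] linmap_lc[OF lin] fixW onA)
    also have "(\<Sum>t\<in>A. sm (c t) (\<tau> t)) = lc (\<tau> ` A) (\<lambda>s. c (inv_into A \<tau> s))"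
      using inj by (simp add: lc_image inv_into_f_f)
    finally show "y \<in> spanB W (\<tau> ` A)" using cw by (auto intro: spanB_I)
  qed
  show "spanB W (\<tau> ` A) \<subseteq> \<phi> ` spanB W A"
  proof
    fix y assume "y \<in> spanB W (\<tau> ` A)"
    then obtain c w where cw: "w \<in> W" "y = lc (\<tau> ` A) c + w" unfolding spanB_def by blast
    have "\<phi> (lc A (\<lambda>t. c (\<tau> t)) + w) = y"
      using cw inj by (simp add: linmap_add[OF lin] linmap_lc[OF lin] fixW onA lc_image)
    moreover have "lc A (\<lambda>t. c (\<tau> t)) + w \<in> spanB W A" using cw by (auto intro: spanB_I)
    ultimately show "y \<in> \<phi> ` spanB W A" by blast
  qed
qed

end


context lvs begin

lemma ag2: "a + b = c + d \<Longrightarrow> a - c = d - (b::'a::ab_group_add)"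
  by (simp add: algebra_simps)

lemma spanB_inter:
  assumes sW: "sub W" and iT: "indepB W T" and A: "A \<subseteq> T" and B: "B \<subseteq> T"
  shows "spanB W A \<inter> spanB W B \<subseteq> spanB W (A \<inter> B)"
proof
  have finT: "finite T" using iT by (simp add: indepB_def)
  fix v assume "v \<in> spanB W A \<inter> spanB W B"
  then obtain a w1 b w2 where ab: "w1 \<in> W" "v = lc A a + w1" "w2 \<in> W" "v = lc B b + w2"
    unfolding spanB_def by blast
  define a' where "a' t = (if t \<in> A then a t else 0)" for t
  define b' where "b' t = (if t \<in> B then b t else 0)" for t
  have la: "lc A a = lc T a'" unfolding a'_def by (rule lc_extend[OF finT A])
  have lb: "lc B b = lc T b'" unfolding b'_def by (rule lc_extend[OF finT B])
  have "lc A a - lc B b = w2 - w1" using ab by (intro ag2) simp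
  then have "lc T (\<lambda>t. a' t - b' t) = w2 - w1" using la lb lc_diff by metis
  then have "lc T (\<lambda>t. a' t - b' t) \<in> W" using sub_diff[OF sW] ab by simp
  then have eq: "\<forall>t\<in>T. a' t = b' t" using iT by (auto simp: indepB_def)
  have "lc A a = lc T (\<lambda>t. if t \<in> A \<inter> B then a t else 0)"
    unfolding la using eq A B by (intro lc_cong) (auto simp: a'_def b'_def)
  also have "\<dots> = lc (A \<inter> B) a" using lc_extend[OF finT order_trans[OF Int_lower1 A], where c = a] by simp
  finally show "v \<in> spanB W (A \<inter> B)" using ab by (auto intro: spanB_I)
qed

lemma spanB_codim1:
  assumes sW: "sub W" and iT: "indepB W T" and R: "R \<subseteq> T" and y: "y \<in> T" "y \<notin> R"
  shows "dimq (spanB W (insert y R)) (spanB W R) 1"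
proof -
  have finT: "finite T" using iT by (simp add: indepB_def)
  have finR: "finite (insert y R)" "finite R" using R finT y by (auto intro: finite_subset)
  define U where "U = spanB W R"
  have sU: "sub U" using sub_spanB[OF sW] by (simp add: U_def)
  have yU: "y \<notin> U"
  proof
    assume "y \<in> U"
    moreover have "y \<in> spanB W {y}" using spanB_S[of "{y}" W] sW by simp
    ultimately have "y \<in> spanB W ({y} \<inter> R)" using spanB_inter[OF sW iT, of "{y}" R] y R
      by (auto simp: U_def)
    then have "y \<in> W" using y by (simp add: spanB_empty)
    then show False using indep_not_in[OF iT y(1)] by simp
  qed
  show ?thesis unfolding dimq_def U_def[symmetric]
  proof (intro exI[of _ "{y}"] conjI)
    show "{y} \<subseteq> spanB W (insert y R)" using spanB_S[OF finR(1) sW] by simp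
    show "finite {y}" "card {y} = 1" by auto
    show "spanB W (insert y R) \<subseteq> spanB U {y}"
    proof (rule spanB_min[OF sub_spanB[OF sU]])
      have "W \<subseteq> U" unfolding U_def by (rule spanB_B[OF sW])
      then show "W \<subseteq> spanB U {y}" using spanB_B[OF sU] by blast
      have "R \<subseteq> U" unfolding U_def by (rule spanB_S[OF finR(2) sW])
      then show "insert y R \<subseteq> spanB U {y}" using spanB_B[OF sU] spanB_S[of "{y}" U] sU by auto
    qed
    show "indepB U {y}" unfolding indepB_def
    proof (intro conjI allI impI ballI)
      show "finite {y}" by simp
      fix c s assume c: "lc {y} c \<in> U" and s: "s \<in> {y}"
      have "sm (c y) y \<in> U" using c by (simp add: lc_def)
      show "c s = 0"
      proof (rule ccontr)
        assume "c s \<noteq> 0"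
        then have "c y \<noteq> 0" using s by simp
        then have "y \<in> U" using sub_sm[OF sU \<open>sm (c y) y \<in> U\<close>, of "inverse (c y)"] sm_inv by simp
        then show False using yU by simp
      qed
    qed
  qed
qed

lemma adjacent_swap:
  assumes sW: "sub W" and iT: "indepB W T" and R: "R \<subseteq> T"
    and x: "x \<in> T" "x \<notin> R" and y: "y \<in> T" "y \<notin> R" and xy: "x \<noteq> y"
  shows "adjacent sm (spanB W (insert x R)) (spanB W (insert y R))"
proof -
  have finT: "finite T" using iT by (simp add: indepB_def)
  define P where "P = spanB W (insert x R)"
  define Q where "Q = spanB W (insert y R)"
  define U where "U = spanB W R"
  have sPQ: "sub P" "sub Q" using sub_spanB[OF sW] by (simp_all add: P_def Q_def)
  have PQU: "P \<inter> Q \<subseteq> U"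
    using spanB_inter[OF sW iT, of "insert x R" "insert y R"] R x y xy by (auto simp: P_def Q_def U_def)
  have finxy: "finite (insert x R)" "finite (insert y R)" using R x y finT by (auto intro: finite_subset)
  moreover have "U \<subseteq> P" "U \<subseteq> Q" unfolding U_def P_def Q_def
    using spanB_mono[OF sW subset_refl finxy(1), of R] spanB_mono[OF sW subset_refl finxy(2), of R]
    by auto
  ultimately have PQ: "P \<inter> Q = U" "Q \<inter> P = U" using PQU by auto
  have dQ: "dimq Q (P \<inter> Q) 1" using spanB_codim1[OF sW iT R y] PQ by (simp add: Q_def U_def)
  have dP: "dimq P (Q \<inter> P) 1" using spanB_codim1[OF sW iT R x] PQ by (simp add: P_def U_def)
  have "dimq (ssum P Q) P 1" using dimq_second_iso[OF sPQ] dQ by simp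
  moreover have "dimq (ssum P Q) Q 1" using dimq_second_iso[OF sPQ(2,1)] dP by (simp add: ssum_comm)
  ultimately show ?thesis unfolding adjacent_def P_def[symmetric] Q_def[symmetric]
    using qdim_dimq sPQ by simp
qed

definition tau :: "('v \<Rightarrow> 'v) \<Rightarrow> 'v set \<Rightarrow> 'v set \<Rightarrow> 'v \<Rightarrow> 'v" where
  "tau \<sigma> Sx J t = (if t \<in> J then \<sigma> t else if t \<in> \<sigma> ` J then inv_into Sx \<sigma> t else t)"

lemma tau_props:
  assumes bij: "bij_betw \<sigma> Sx Sy" and disj: "Sx \<inter> Sy = {}" and J: "J \<subseteq> Sx"
  shows "\<And>t. t \<in> Sx \<union> Sy \<Longrightarrow> tau \<sigma> Sx J t \<in> Sx \<union> Sy"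
    and "\<And>t. t \<in> Sx \<union> Sy \<Longrightarrow> tau \<sigma> Sx J (tau \<sigma> Sx J t) = t"
    and "tau \<sigma> Sx J ` Sx = (Sx - J) \<union> \<sigma> ` J"
proof -
  have inj: "inj_on \<sigma> Sx" and im: "\<sigma> ` Sx = Sy" using bij by (auto simp: bij_betw_def)
  have sJ: "\<sigma> ` J \<subseteq> Sy" using J im by blast
  have iv: "s \<in> Sx \<Longrightarrow> inv_into Sx \<sigma> (\<sigma> s) = s" for s using inv_into_f_f[OF inj] by simp
  have sJn: "\<sigma> t \<notin> J" if "t \<in> J" for t using that J sJ disj by blast
  show "\<And>t. t \<in> Sx \<union> Sy \<Longrightarrow> tau \<sigma> Sx J t \<in> Sx \<union> Sy"
  proof -
    fix t assume t: "t \<in> Sx \<union> Sy"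
    show "tau \<sigma> Sx J t \<in> Sx \<union> Sy"
    proof (cases "t \<in> J")
      case True
      then show ?thesis using sJ by (auto simp: tau_def)
    next
      case False
      note nJ = False
      show ?thesis
      proof (cases "t \<in> \<sigma> ` J")
        case True
        then obtain s where s: "s \<in> J" "t = \<sigma> s" by auto
        then have "tau \<sigma> Sx J t = s" using nJ iv J by (auto simp: tau_def)
        then show ?thesis using s J by auto
      next
        case False
        then show ?thesis using nJ t by (simp add: tau_def)
      qed
    qed
  qed
  show "\<And>t. t \<in> Sx \<union> Sy \<Longrightarrow> tau \<sigma> Sx J (tau \<sigma> Sx J t) = t"
  proof -
    fix t assume t: "t \<in> Sx \<union> Sy"
    show "tau \<sigma> Sx J (tau \<sigma> Sx J t) = t"
    proof (cases "t \<in> J")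
      case True
      then show ?thesis unfolding tau_def using sJn[OF True] iv J by auto
    next
      case False
      note nJ = False
      show ?thesis
      proof (cases "t \<in> \<sigma> ` J")
        case True
        then obtain s where s: "s \<in> J" "t = \<sigma> s" by auto
        then show ?thesis unfolding tau_def using nJ iv J by auto
      next
        case False
        then show ?thesis unfolding tau_def using nJ by auto
      qed
    qed
  qed
  show "tau \<sigma> Sx J ` Sx = (Sx - J) \<union> \<sigma> ` J"
  proof
    show "tau \<sigma> Sx J ` Sx \<subseteq> (Sx - J) \<union> \<sigma> ` J"
    proof
      fix u assume "u \<in> tau \<sigma> Sx J ` Sx"
      then obtain t where t: "t \<in> Sx" "u = tau \<sigma> Sx J t" by auto
      have "t \<notin> \<sigma> ` J" using t sJ disj by blast
      then show "u \<in> (Sx - J) \<union> \<sigma> ` J" using t by (cases "t \<in> J") (auto simp: tau_def)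
    qed
    show "(Sx - J) \<union> \<sigma> ` J \<subseteq> tau \<sigma> Sx J ` Sx"
    proof
      fix t assume "t \<in> (Sx - J) \<union> \<sigma> ` J"
      then show "t \<in> tau \<sigma> Sx J ` Sx"
      proof
        assume t: "t \<in> Sx - J"
        then have "t \<notin> \<sigma> ` J" using sJ disj by blast
        then have "tau \<sigma> Sx J t = t" using t by (simp add: tau_def)
        then show ?thesis using t by (intro rev_image_eqI[of t]) auto
      next
        assume "t \<in> \<sigma> ` J"
        then obtain s where "s \<in> J" "t = \<sigma> s" by auto
        then have "tau \<sigma> Sx J s = t" by (simp add: tau_def)
        then show ?thesis using \<open>s \<in> J\<close> J by blast
      qed
    qed
  qed
qed

end


context lvs begin

lemma spanB_eq:
  assumes "sub X" "sub W" "W \<subseteq> X" "dimq X W d"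
  obtains S where "S \<subseteq> X" "finite S" "card S = d" "indepB W S" "spanB W S = X"
proof -
  obtain S where S: "S \<subseteq> X" "finite S" "card S = d" "X \<subseteq> spanB W S" "indepB W S"
    using assms(4) unfolding dimq_def by blast
  have "spanB W S \<subseteq> X" by (rule spanB_min[OF assms(1) assms(3) S(1)])
  then show ?thesis using that S by blast
qed

lemma path_exists:
  assumes X: "X \<in> Gr sm" and Y: "Y \<in> Gr sm"
    and dX: "dimq X (X \<inter> Y) d" and dY: "dimq Y (X \<inter> Y) d"
  shows "gwalk sm X Y d"
proof -
  define W where "W = X \<inter> Y"
  have sX: "sub X" and sY: "sub Y" using X Y by (auto simp: Gr_def)
  have sW: "sub W" using sub_inter[OF sX sY] by (simp add: W_def)
  obtain Sx where Sx: "Sx \<subseteq> X" "finite Sx" "card Sx = d" "indepB W Sx" "spanB W Sx = X"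
    using spanB_eq[OF sX sW _ dX[folded W_def]] W_def by blast
  obtain Sy where Sy: "Sy \<subseteq> Y" "finite Sy" "card Sy = d" "indepB W Sy" "spanB W Sy = Y"
    using spanB_eq[OF sY sW _ dY[folded W_def]] W_def by blast
  have disj: "Sx \<inter> Sy = {}"
    using indep_not_in[OF Sx(4)] Sx(1) Sy(1) by (auto simp: W_def)
  define T where "T = Sx \<union> Sy"
  have finT: "finite T" using Sx Sy by (simp add: T_def)
  have iT: "indepB W T" unfolding indepB_def
  proof (intro conjI allI impI)
    show "finite T" by fact
    fix c assume c: "lc T c \<in> W"
    have lcT: "lc T c = lc Sx c + lc Sy c" unfolding T_def by (rule lc_union[OF Sx(2) Sy(2) disj])
    have "lc Sx c \<in> X" using sub_lc[OF sX Sx(1)] .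
    moreover have "lc Sy c \<in> Y" using sub_lc[OF sY Sy(1)] .
    moreover have "lc Sx c + lc Sy c \<in> X" using c lcT by (simp add: W_def)
    ultimately have "lc Sy c \<in> W" using sub_add_cancel[OF sX] by (simp add: W_def)
    then have zy: "\<forall>s\<in>Sy. c s = 0" using Sy(4) by (simp add: indepB_def)
    then have "lc Sy c = 0" using lc_cong[of Sy c "\<lambda>_. 0"] by simp
    then have "lc Sx c \<in> W" using c lcT by simp
    then have "\<forall>s\<in>Sx. c s = 0" using Sx(4) by (simp add: indepB_def)
    then show "\<forall>s\<in>T. c s = 0" using zy by (auto simp: T_def)
  qed
  obtain C where C: "sub C" "W \<subseteq> C" "indepB C T" "spanB C T = UNIV"
    using complement_exists[OF sW iT] by blast
  have "\<exists>h. bij_betw h Sx Sy" using finite_same_card_bij[OF Sx(2) Sy(2)] Sx(3) Sy(3) by simp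
  then obtain \<sigma> where \<sigma>: "bij_betw \<sigma> Sx Sy" by blast
  obtain e where e: "bij_betw e {0..<d} Sx" using ex_bij_betw_nat_finite[OF Sx(2)] Sx(3) by blast
  have einj: "inj_on e {..<d}" and eim: "e ` {..<d} = Sx" using e by (auto simp: bij_betw_def atLeast0LessThan)
  define J where "J k = e ` {..<k}" for k
  define p where "p k = spanB W ((Sx - J k) \<union> \<sigma> ` J k)" for k
  have JSx: "k \<le> d \<Longrightarrow> J k \<subseteq> Sx" for k using eim by (auto simp: J_def)
  have pGr: "p k \<in> Gr sm" if k: "k \<le> d" for k
  proof -
    note tp = tau_props[OF \<sigma> disj JSx[OF k]]
    obtain \<phi> where \<phi>: "linmap \<phi>" "\<forall>v. \<phi> (\<phi> v) = v" "\<forall>c\<in>C. \<phi> c = c"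
      "\<forall>t\<in>T. \<phi> t = tau \<sigma> Sx (J k) t"
      using swap_map_exists[OF C(1) C(3) C(4), of "tau \<sigma> Sx (J k)"] tp(1,2) by (auto simp: T_def)
    have injtau: "inj_on (tau \<sigma> Sx (J k)) Sx"
      by (rule inj_on_inverseI[of _ "tau \<sigma> Sx (J k)"]) (use tp(2) in auto)
    have "\<phi> ` spanB W Sx = spanB W (tau \<sigma> Sx (J k) ` Sx)"
      by (rule image_spanB[OF \<phi>(1) _ _ injtau]) (use \<phi> C(2) in \<open>auto simp: T_def\<close>)
    then have "p k = \<phi> ` X" using tp(3) Sx(5) by (simp add: p_def)
    then show ?thesis using transport_Gr[OF \<phi>(1) _ X] \<phi>(2) by simp
  qed
  have p0: "p 0 = X" using Sx(5) by (simp add: p_def J_def)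
  have pd: "p d = Y"
  proof -
    have "J d = Sx" using eim by (simp add: J_def)
    moreover have "\<sigma> ` Sx = Sy" using \<sigma> by (simp add: bij_betw_def)
    ultimately show ?thesis using Sy(5) by (simp add: p_def)
  qed
  have adj: "adjacent sm (p k) (p (Suc k))" if k: "k < d" for k
  proof -
    define R where "R = (Sx - J (Suc k)) \<union> \<sigma> ` J k"
    have ek1: "e k \<in> Sx" using k eim by auto
    have ek2: "e k \<notin> J k"
    proof
      assume "e k \<in> J k"
      then obtain x where x: "x < k" "e k = e x" by (auto simp: J_def)
      then have "k = x" using inj_onD[OF einj x(2)] k by simp
      then show False using x by simp
    qed
    note ek = ek1 ek2
    have JS: "J (Suc k) = insert (e k) (J k)" by (simp add: J_def lessThan_Suc)
    have sJ: "\<sigma> ` Sx = Sy" "inj_on \<sigma> Sx" using \<sigma> by (auto simp: bij_betw_def)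
    have Jk: "J k \<subseteq> Sx" using JSx k by simp
    have sek: "\<sigma> (e k) \<notin> \<sigma> ` J k" using sJ(2) ek Jk by (auto simp: inj_on_def)
    have "(Sx - J k) \<union> \<sigma> ` J k = insert (e k) R"
      unfolding R_def JS using ek disj sJ Jk by auto
    moreover have "(Sx - J (Suc k)) \<union> \<sigma> ` J (Suc k) = insert (\<sigma> (e k)) R"
      unfolding R_def JS by auto
    moreover have "R \<subseteq> T" using Jk sJ by (auto simp: R_def T_def)
    moreover have "e k \<in> T" "e k \<notin> R" using ek disj sJ Jk by (auto simp: T_def R_def JS)
    moreover have "\<sigma> (e k) \<in> T" "\<sigma> (e k) \<notin> R" using ek sJ disj sek by (auto simp: T_def R_def)
    moreover have "e k \<noteq> \<sigma> (e k)" using ek sJ disj by auto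
    ultimately show ?thesis unfolding p_def using adjacent_swap[OF sW iT] by simp
  qed
  show ?thesis unfolding gwalk_def
    by (intro exI[of _ p]) (use p0 pd pGr adj in auto)
qed

lemma main_lvs:
  assumes X: "X \<in> Gr sm" and Y: "Y \<in> Gr sm"
  shows "(gdist sm X Y = enat d \<longleftrightarrow>
            qdim_eq sm (ssum X Y) X d \<and> qdim_eq sm (ssum X Y) Y d)
       \<and> (qdim_eq sm (ssum X Y) X d \<and> qdim_eq sm (ssum X Y) Y d \<longleftrightarrow>
            qdim_eq sm X (X \<inter> Y) d \<and> qdim_eq sm Y (X \<inter> Y) d)"
proof -
  have sX: "sub X" and sY: "sub Y" using X Y by (auto simp: Gr_def)
  have sW: "sub (X \<inter> Y)" using sub_inter[OF sX sY] .
  have conv: "(qdim_eq sm (ssum X Y) X n \<and> qdim_eq sm (ssum X Y) Y n) \<longleftrightarrow> rel X Y n" for n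
    using qdim_dimq sX sY by (simp add: rel_def)
  have conv2: "(qdim_eq sm X (X \<inter> Y) n \<and> qdim_eq sm Y (X \<inter> Y) n) \<longleftrightarrow>
      (dimq X (X \<inter> Y) n \<and> dimq Y (X \<inter> Y) n)" for n
    using qdim_dimq[OF sW] by simp
  have iso: "rel X Y n \<longleftrightarrow> (dimq X (X \<inter> Y) n \<and> dimq Y (X \<inter> Y) n)" for n
    using dimq_second_iso[OF sX sY, of n] dimq_second_iso[OF sY sX, of n]
    by (auto simp: rel_def ssum_comm Int_commute)
  have walk: "rel X Y n \<Longrightarrow> gwalk sm X Y n" for n using path_exists[OF X Y] iso by blast
  have uniq: "rel X Y a \<Longrightarrow> rel X Y b \<Longrightarrow> a = b" for a b
    using dimq_unique[OF sX] by (auto simp: rel_def)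
  define S where "S = {n. gwalk sm X Y n}"
  have gd: "gdist sm X Y = Inf (enat ` S)" by (simp add: gdist_def S_def)
  have fwd: "gdist sm X Y = enat n" if r: "rel X Y n" for n
  proof (rule antisym)
    show "gdist sm X Y \<le> enat n" unfolding gd using walk[OF r] by (auto simp: S_def intro: Inf_lower)
    show "enat n \<le> gdist sm X Y" unfolding gd
    proof (rule Inf_greatest)
      fix m assume "m \<in> enat ` S"
      then obtain k where k: "m = enat k" "gwalk sm X Y k" by (auto simp: S_def)
      obtain b where "b \<le> k" "rel X Y b" using walk_rel[OF k(2)] by blast
      then show "enat n \<le> m" using uniq[OF r] k by simp
    qed
  qed
  have bwd: "rel X Y d" if g: "gdist sm X Y = enat d"
  proof -
    have "S \<noteq> {}" using g unfolding gd by (auto simp: top_enat_def)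
    then have "Inf (enat ` S) \<in> enat ` S" unfolding Inf_enat_def by (auto intro: LeastI)
    then have "d \<in> S" using g gd by auto
    then have "gwalk sm X Y d" by (simp add: S_def)
    then obtain b where b: "b \<le> d" "rel X Y b" using walk_rel by blast
    then have "gdist sm X Y = enat b" using fwd by blast
    then have "b = d" using g by simp
    then show ?thesis using b by simp
  qed
  show ?thesis using conv conv2 iso fwd bwd by blast
qed

end

theorem mainTheorem7:
  fixes smult :: "'k::division_ring \<Rightarrow> 'v::ab_group_add \<Rightarrow> 'v"
    and X Y :: "'v set" and d :: nat
  assumes "left_vector_space smult"
    and "Gr smult \<noteq> {}"
    and "X \<in> Gr smult" and "Y \<in> Gr smult"
  shows "(gdist smult X Y = enat d \<longleftrightarrow>
            qdim_eq smult (ssum X Y) X d \<and> qdim_eq smult (ssum X Y) Y d)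
       \<and> (qdim_eq smult (ssum X Y) X d \<and> qdim_eq smult (ssum X Y) Y d \<longleftrightarrow>
            qdim_eq smult X (X \<inter> Y) d \<and> qdim_eq smult Y (X \<inter> Y) d)"
proof -
  interpret lvs smult using assms(1) by (rule lvs.intro)
  show ?thesis using main_lvs assms(3,4) by blast
qed

end
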